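(* Let $\eta_1,\eta_2,\dots$ be independent standard Gaussian random variables. Then, as $n\to\infty$, $$\mathbb{E}\,\max\{|\eta_1|,\dots,|\eta_n|\} = \left( 1 + \frac{1+o(1)}{8n \log n}\right) \mathbb{E}\,\max\{\eta_1,\dots,\eta_{2n}\}.$$ *)

theory Defs
  imports "HOL-Probability.Probability"
begin

end

theory Submission
  imports Defs "HOL-Real_Asymp.Real_Asymp"
begin

abbreviation "phi \<equiv> std_normal_density"

definition Phi :: "real \<Rightarrow> real" where
  "Phi x = (LBINT t=-\<infinity>..ereal x. phi t)"

lemma phi_int: "A \<in> sets borel \<Longrightarrow> set_integrable lborel A phi"
  unfolding set_integrable_def
  by (rule integrable_mult_indicator) auto

lemma phi_cont: "continuous_on A phi"
  unfolding normal_density_def by (intro continuous_intros) auto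

lemma phi_pos: "phi x > 0" by (simp add: normal_density_pos)

lemma Phi_deriv: "(Phi has_real_derivative phi x) (at x)"
proof -
  have eq: "\<And>u. u \<in> {x-1..x+1} \<Longrightarrow> Phi u = Phi (x-1) + (LBINT t=ereal (x-1)..ereal u. phi t)"
    unfolding Phi_def
    by (subst interval_integral_sum[symmetric])
       (auto simp: interval_lebesgue_integrable_def phi_int min_def max_def)
  have "((\<lambda>u. LBINT y=ereal (x-1)..ereal u. phi y) has_vector_derivative phi x) (at x within {x-1..x+1})"
    by (rule interval_integral_FTC2) (auto intro: phi_cont)
  then have "((\<lambda>u. Phi (x-1) + (LBINT y=ereal (x-1)..ereal u. phi y)) has_vector_derivative phi x) (at x within {x-1..x+1})"
    by (auto intro!: derivative_eq_intros)
  then have "(Phi has_vector_derivative phi x) (at x within {x-1..x+1})"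
  proof (rule has_vector_derivative_weaken)
    fix u assume "u \<in> {x-1..x+1}"
    then show "Phi (x-1) + (LBINT y=ereal (x-1)..ereal u. phi y) = Phi u" using eq by metis
  qed auto
  then show ?thesis
    by (simp add: at_within_Icc_at has_real_derivative_iff_has_vector_derivative)
qed

definition Q :: "real \<Rightarrow> real" where "Q x = 1 - Phi x"

lemma phi_total: "(LBINT t=-\<infinity>..\<infinity>. phi t) = 1"
  by (simp add: interval_lebesgue_integral_def set_lebesgue_integral_def einterval_def)

lemma Q_eq: "Q x = (LBINT t=ereal x..\<infinity>. phi t)"
proof -
  have "Phi x + (LBINT t=ereal x..\<infinity>. phi t) = (LBINT t=-\<infinity>..\<infinity>. phi t)"
    unfolding Phi_def
    by (rule interval_integral_sum) (auto simp: interval_lebesgue_integrable_def phi_int)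
  then show ?thesis using phi_total by (simp add: Q_def)
qed

lemma Q_eq': "Q x = (LBINT t:{x<..}. phi t)"
  using Q_eq by (simp add: interval_integral_to_infinity_eq)

lemma Q_deriv: "(Q has_real_derivative (- phi x)) (at x)"
  unfolding Q_def[abs_def] by (auto intro!: derivative_eq_intros Phi_deriv)

lemma Q_cont: "isCont Q x"
  using Q_deriv DERIV_isCont by blast

lemma phi_deriv: "DERIV phi t :> - t * phi t"
  unfolding normal_density_def
  by (auto intro!: derivative_eq_intros simp: field_simps power2_eq_square)

lemma FTC_Ioi:
  fixes F f :: "real \<Rightarrow> real"
  assumes D: "\<And>x. x \<ge> b \<Longrightarrow> DERIV F x :> f x"
    and C: "\<And>x. x > b \<Longrightarrow> isCont f x"
    and N: "\<And>x. x > b \<Longrightarrow> f x \<ge> 0"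
    and L: "(F \<longlongrightarrow> L) at_top"
  shows "set_integrable lborel {b<..} f" "(LBINT t:{b<..}. f t) = L - F b"
proof -
  have cF: "isCont F b" using D[of b] DERIV_isCont by blast
  have A: "((F \<circ> real_of_ereal) \<longlongrightarrow> F b) (at_right (ereal b))"
    unfolding ereal_tendsto_simps using cF
    by (simp add: continuous_at_split continuous_within filterlim_at_split)
  have B: "((F \<circ> real_of_ereal) \<longlongrightarrow> L) (at_left \<infinity>)"
    unfolding ereal_tendsto_simps by (rule L)
  have "set_integrable lborel (einterval (ereal b) \<infinity>) f \<and> (LBINT t=ereal b..\<infinity>. f t) = L - F b"
    using interval_integral_FTC_nonneg[of "ereal b" \<infinity> F f, OF _ _ _ _ A B] D C N
    by (auto simp: less_imp_le)
  then show "set_integrable lborel {b<..} f" "(LBINT t:{b<..}. f t) = L - F b"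
    by (auto simp: interval_integral_to_infinity_eq einterval_def greaterThan_def)
qed

lemma int_tphi:
  assumes "0 \<le> b"
  shows "set_integrable lborel {b<..} (\<lambda>t. t * phi t)" "(LBINT t:{b<..}. t * phi t) = phi b"
proof -
  have d: "DERIV (\<lambda>t. - phi t) x :> x * phi x" for x
    unfolding normal_density_def by (auto intro!: derivative_eq_intros simp: field_simps power2_eq_square)
  have lim: "((\<lambda>t. - phi t) \<longlongrightarrow> 0) at_top"
    unfolding normal_density_def by real_asymp
  show "set_integrable lborel {b<..} (\<lambda>t. t * phi t)" "(LBINT t:{b<..}. t * phi t) = phi b"
    using FTC_Ioi[of b "\<lambda>t. - phi t" "\<lambda>t. t * phi t" 0, OF d _ _ lim]
    using assms phi_pos
    by (auto simp: less_imp_le intro!: continuous_intros) (auto simp: normal_density_def intro!: continuous_intros)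
qed

lemma Q_upper:
  assumes "x > 0" shows "Q x \<le> phi x / x"
proof -
  have "Q x = (LBINT t:{x<..}. phi t)" by (rule Q_eq')
  also have "\<dots> \<le> (LBINT t:{x<..}. (1/x) * (t * phi t))"
  proof (rule set_integral_mono)
    show "set_integrable lborel {x<..} phi" by (rule phi_int) auto
    show "set_integrable lborel {x<..} (\<lambda>t. (1/x) * (t * phi t))"
      using int_tphi(1)[of x] assms by (intro set_integrable_mult_right) auto
    fix t assume "t \<in> {x<..}"
    then show "phi t \<le> (1/x) * (t * phi t)"
      using assms phi_pos[of t] by (auto simp: field_simps)
  qed
  also have "\<dots> = phi x / x"
    using int_tphi(2)[of x] assms by (simp add: set_integral_mult_right)
  finally show ?thesis .
qed

lemma Q_lower:
  assumes "x > 0" shows "phi x * x / (1 + x^2) \<le> Q x"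
proof -
  have d: "DERIV (\<lambda>t. - phi t / t) t :> phi t * (1 + 1/t^2)" if "t \<ge> x" for t
    using that assms
    by (auto intro!: derivative_eq_intros phi_deriv simp: field_simps power2_eq_square)
  have lim: "((\<lambda>t. - phi t / t) \<longlongrightarrow> 0) at_top"
    unfolding normal_density_def by real_asymp
  have I: "set_integrable lborel {x<..} (\<lambda>t. phi t * (1 + 1/t^2))"
    "(LBINT t:{x<..}. phi t * (1 + 1/t^2)) = phi x / x"
    using FTC_Ioi[of x "\<lambda>t. - phi t / t" "\<lambda>t. phi t * (1 + 1/t^2)" 0, OF d _ _ lim] assms phi_pos
    by (auto simp: less_imp_le intro!: continuous_intros)
       (auto simp: normal_density_def intro!: continuous_intros)
  have "phi x / x \<le> (LBINT t:{x<..}. (1 + 1/x^2) * phi t)"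
    unfolding I(2)[symmetric]
  proof (rule set_integral_mono)
    show "set_integrable lborel {x<..} (\<lambda>t. (1 + 1/x^2) * phi t)"
      by (intro set_integrable_mult_right phi_int) auto
    fix t assume "t \<in> {x<..}"
    then have "1/t^2 \<le> 1/x^2" using assms by (auto simp: field_simps power_mono)
    then show "phi t * (1 + 1/t^2) \<le> (1 + 1/x^2) * phi t"
      using phi_pos[of t] mult_left_mono[of "1/t^2" "1/x^2" "phi t"] by (simp add: algebra_simps)
  qed (fact I)
  also have "\<dots> = (1 + 1/x^2) * Q x"
    by (simp add: Q_eq' set_integral_mult_right)
  finally have "phi x / x \<le> (1 + 1/x^2) * Q x" .
  moreover have "0 < 1 + x^2" by (simp add: add_pos_nonneg)
  ultimately show ?thesis using assms
    by (simp add: pos_divide_le_eq field_simps power2_eq_square)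
qed

lemma Q_strict_decr: "x < y \<Longrightarrow> Q y < Q x"
proof (rule DERIV_neg_imp_decreasing[of x y Q])
  fix z show "\<exists>d. DERIV Q z :> d \<and> d < 0"
    using Q_deriv[of z] phi_pos[of z] by (intro exI[of _ "- phi z"]) simp
qed

lemma Q_mono: "x \<le> y \<Longrightarrow> Q y \<le> Q x"
  using Q_strict_decr[of x y] by (cases "x = y") auto

lemma Q_pos: "Q x > 0"
proof -
  have "0 < Q (max x 1)"
    using Q_lower[of "max x 1"] phi_pos[of "max x 1"]
    by (smt (verit) divide_pos_pos mult_pos_pos zero_less_power)
  then show ?thesis using Q_mono[of x "max x 1"] by linarith
qed


lemma Phi_reflect: "Phi (-x) = Q x"
proof -
  have "Phi (-x) = (LBINT t=-\<infinity>..ereal (-x). phi t)" by (simp add: Phi_def)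
  also have "\<dots> = (LBINT t=ereal x..\<infinity>. phi (-t))"
    by (subst interval_integral_reflect) simp
  also have "\<dots> = Q x" by (simp add: Q_eq normal_density_def)
  finally show ?thesis .
qed

lemma Q_neg: "Q (-x) = 1 - Q x"
  using Phi_reflect[of x] by (simp add: Q_def)

lemma Q_zero: "Q 0 = 1/2"
  using Q_neg[of 0] by simp

lemma (in prob_space) tail_nn:
  fixes X :: "'a \<Rightarrow> real"
  assumes X[measurable]: "X \<in> borel_measurable M" and nonneg: "\<And>\<omega>. \<omega> \<in> space M \<Longrightarrow> 0 \<le> X \<omega>"
  shows "(\<integral>\<^sup>+t. indicator {0<..} t * emeasure M {\<omega>\<in>space M. t \<le> X \<omega>} \<partial>lborel) = (\<integral>\<^sup>+\<omega>. ennreal (X \<omega>) \<partial>M)"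
proof -
  interpret P: pair_sigma_finite M lborel ..
  have meas: "(\<lambda>p. indicator {p. 0 < snd p \<and> snd p \<le> X (fst p)} p :: ennreal) \<in> borel_measurable (M \<Otimes>\<^sub>M lborel)"
    by measurable
  have "(\<integral>\<^sup>+t. indicator {0<..} t * emeasure M {\<omega>\<in>space M. t \<le> X \<omega>} \<partial>lborel)
      = (\<integral>\<^sup>+t. (\<integral>\<^sup>+\<omega>. indicator {p. 0 < snd p \<and> snd p \<le> X (fst p)} (\<omega>, t) \<partial>M) \<partial>lborel)"
  proof (rule nn_integral_cong)
    fix t :: real
    have "(\<integral>\<^sup>+\<omega>. indicator {p. 0 < snd p \<and> snd p \<le> X (fst p)} (\<omega>, t) \<partial>M)
        = (\<integral>\<^sup>+\<omega>. indicator {0<..} t * indicator {\<omega>\<in>space M. t \<le> X \<omega>} \<omega> \<partial>M)"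
      by (rule nn_integral_cong) (auto split: split_indicator)
    also have "\<dots> = indicator {0<..} t * emeasure M {\<omega>\<in>space M. t \<le> X \<omega>}"
      by (subst nn_integral_cmult) auto
    finally show "indicator {0<..} t * emeasure M {\<omega>\<in>space M. t \<le> X \<omega>}
        = (\<integral>\<^sup>+\<omega>. indicator {p. 0 < snd p \<and> snd p \<le> X (fst p)} (\<omega>, t) \<partial>M)" by simp
  qed
  also have "\<dots> = (\<integral>\<^sup>+\<omega>. (\<integral>\<^sup>+t. indicator {p. 0 < snd p \<and> snd p \<le> X (fst p)} (\<omega>, t) \<partial>lborel) \<partial>M)"
    by (rule P.Fubini[OF meas])
  also have "\<dots> = (\<integral>\<^sup>+\<omega>. ennreal (X \<omega>) \<partial>M)"
  proof (rule nn_integral_cong)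
    fix \<omega> assume "\<omega> \<in> space M"
    then have "(\<integral>\<^sup>+t. indicator {p. 0 < snd p \<and> snd p \<le> X (fst p)} (\<omega>, t) \<partial>lborel)
        = (\<integral>\<^sup>+t. indicator {0<..X \<omega>} t \<partial>lborel)"
      by (intro nn_integral_cong) (auto split: split_indicator)
    also have "\<dots> = ennreal (X \<omega>)" using nonneg[OF \<open>\<omega> \<in> space M\<close>] by simp
    finally show "(\<integral>\<^sup>+t. indicator {p. 0 < snd p \<and> snd p \<le> X (fst p)} (\<omega>, t) \<partial>lborel) = ennreal (X \<omega>)" .
  qed
  finally show ?thesis .
qed

lemma nn_to_set_integral:
  fixes g :: "real \<Rightarrow> real"
  assumes [measurable]: "g \<in> borel_measurable borel" "A \<in> sets borel"
    and nn: "\<And>t. t \<in> A \<Longrightarrow> 0 \<le> g t" and c: "0 \<le> c"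
    and eq: "(\<integral>\<^sup>+t. indicator A t * ennreal (g t) \<partial>lborel) = ennreal c"
  shows "set_integrable lborel A g" "(LINT t:A|lborel. g t) = c"
proof -
  have "(\<integral>\<^sup>+t. ennreal (indicator A t * g t) \<partial>lborel) = (\<integral>\<^sup>+t. indicator A t * ennreal (g t) \<partial>lborel)"
    by (rule nn_integral_cong) (simp split: split_indicator)
  then have eq': "(\<integral>\<^sup>+t. ennreal (indicator A t * g t) \<partial>lborel) = ennreal c"
    using eq by simp
  have "integrable lborel (\<lambda>t. indicator A t * g t)"
    by (rule integrableI_nonneg) (use nn eq' in \<open>auto simp: indicator_def\<close>)
  then show "set_integrable lborel A g" by (simp add: set_integrable_def)
  have "(LINT t:A|lborel. g t) = enn2real (\<integral>\<^sup>+t. ennreal (indicator A t * g t) \<partial>lborel)"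
    unfolding set_lebesgue_integral_def
    by (simp, rule integral_eq_nn_integral) (use nn in \<open>auto simp: indicator_def\<close>)
  then show "(LINT t:A|lborel. g t) = c" using eq' c by simp
qed

lemma (in prob_space) prob_meas_ge: assumes [measurable]: "X \<in> borel_measurable M" shows "(\<lambda>t. prob {\<omega>\<in>space M. t \<le> (X \<omega>::real)}) \<in> borel_measurable borel"
proof -
  have "mono (\<lambda>t. - prob {\<omega>\<in>space M. t \<le> (X \<omega>::real)})"
    by (auto simp: mono_def intro!: finite_measure_mono) measurable
  from borel_measurable_mono[OF this] have "(\<lambda>t. - (- prob {\<omega>\<in>space M. t \<le> X \<omega>})) \<in> borel_measurable borel"
    by measurable
  then show ?thesis by simp
qed

lemma (in prob_space) prob_meas_le: assumes [measurable]: "X \<in> borel_measurable M" shows "(\<lambda>t. prob {\<omega>\<in>space M. (X \<omega>::real) \<le> t}) \<in> borel_measurable borel"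
  by (rule borel_measurable_mono) (auto simp: mono_def intro!: finite_measure_mono, measurable)

lemma (in prob_space) layer_cake:
  fixes X :: "'a \<Rightarrow> real"
  assumes I: "integrable M X"
  shows "set_integrable lborel {0<..} (\<lambda>t. prob {\<omega>\<in>space M. t \<le> X \<omega>})"
    "set_integrable lborel {..<0} (\<lambda>t. prob {\<omega>\<in>space M. X \<omega> \<le> t})"
    "expectation X = (LINT t:{0<..}|lborel. prob {\<omega>\<in>space M. t \<le> X \<omega>})
        - (LINT t:{..<0}|lborel. prob {\<omega>\<in>space M. X \<omega> \<le> t})"
proof -
  have Xm[measurable]: "X \<in> borel_measurable M" using I by auto
  define Xp where "Xp = (\<lambda>\<omega>. max 0 (X \<omega>))"
  define Xn where "Xn = (\<lambda>\<omega>. max 0 (- X \<omega>))"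
  have [measurable]: "Xp \<in> borel_measurable M" "Xn \<in> borel_measurable M" unfolding Xp_def Xn_def by measurable
  have Ip: "integrable M Xp" and In: "integrable M Xn" unfolding Xp_def Xn_def using I by auto
  have Ep: "(\<integral>\<^sup>+\<omega>. ennreal (Xp \<omega>) \<partial>M) = ennreal (expectation Xp)"
    by (rule nn_integral_eq_integral[OF Ip]) (auto simp: Xp_def)
  have En: "(\<integral>\<^sup>+\<omega>. ennreal (Xn \<omega>) \<partial>M) = ennreal (expectation Xn)"
    by (rule nn_integral_eq_integral[OF In]) (auto simp: Xn_def)
  have "(\<integral>\<^sup>+t. indicator {0<..} t * ennreal (prob {\<omega>\<in>space M. t \<le> X \<omega>}) \<partial>lborel)
      = (\<integral>\<^sup>+t. indicator {0<..} t * emeasure M {\<omega>\<in>space M. t \<le> Xp \<omega>} \<partial>lborel)"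
  proof (rule nn_integral_cong)
    fix t :: real
    show "indicator {0<..} t * ennreal (prob {\<omega>\<in>space M. t \<le> X \<omega>})
        = indicator {0<..} t * emeasure M {\<omega>\<in>space M. t \<le> Xp \<omega>}"
    proof (cases "0 < t")
      case True
      then have "{\<omega>\<in>space M. t \<le> Xp \<omega>} = {\<omega>\<in>space M. t \<le> X \<omega>}" by (auto simp: Xp_def)
      then show ?thesis by (simp add: emeasure_eq_measure)
    qed simp
  qed
  also have "\<dots> = ennreal (expectation Xp)"
    using tail_nn[of Xp] Ep by (simp add: Xp_def)
  finally have P: "(\<integral>\<^sup>+t. indicator {0<..} t * ennreal (prob {\<omega>\<in>space M. t \<le> X \<omega>}) \<partial>lborel) = ennreal (expectation Xp)" .
  have ppos: "0 \<le> expectation Xp" "0 \<le> expectation Xn" by (auto simp: Xp_def Xn_def)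
  show S1: "set_integrable lborel {0<..} (\<lambda>t. prob {\<omega>\<in>space M. t \<le> X \<omega>})"
    by (rule nn_to_set_integral(1)[OF prob_meas_ge[OF Xm] _ _ ppos(1) P]) auto
  have V1: "(LINT t:{0<..}|lborel. prob {\<omega>\<in>space M. t \<le> X \<omega>}) = expectation Xp"
    by (rule nn_to_set_integral(2)[OF prob_meas_ge[OF Xm] _ _ ppos(1) P]) auto
  have "(\<integral>\<^sup>+t. indicator {..<0} t * ennreal (prob {\<omega>\<in>space M. X \<omega> \<le> t}) \<partial>lborel)
      = (\<integral>\<^sup>+t. indicator {..<0} (0 + (-1) * t) * ennreal (prob {\<omega>\<in>space M. X \<omega> \<le> 0 + (-1) * t}) \<partial>lborel)"
    using nn_integral_real_affine[of "\<lambda>t. indicator {..<0} t * ennreal (prob {\<omega>\<in>space M. X \<omega> \<le> t})" "-1" 0]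
    using prob_meas_le[OF Xm] by simp
  also have "\<dots> = (\<integral>\<^sup>+t. indicator {0<..} t * emeasure M {\<omega>\<in>space M. t \<le> Xn \<omega>} \<partial>lborel)"
  proof (rule nn_integral_cong)
    fix t :: real
    show "indicator {..<0} (0 + (-1) * t) * ennreal (prob {\<omega>\<in>space M. X \<omega> \<le> 0 + (-1) * t})
        = indicator {0<..} t * emeasure M {\<omega>\<in>space M. t \<le> Xn \<omega>}"
    proof (cases "0 < t")
      case True
      then have "{\<omega>\<in>space M. t \<le> Xn \<omega>} = {\<omega>\<in>space M. X \<omega> \<le> 0 + (-1) * t}" by (auto simp: Xn_def)
      then show ?thesis using True by (simp add: emeasure_eq_measure indicator_def)
    qed (simp add: indicator_def)
  qed
  also have "\<dots> = ennreal (expectation Xn)"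
    using tail_nn[of Xn] En by (simp add: Xn_def)
  finally have N: "(\<integral>\<^sup>+t. indicator {..<0} t * ennreal (prob {\<omega>\<in>space M. X \<omega> \<le> t}) \<partial>lborel) = ennreal (expectation Xn)" .
  show "set_integrable lborel {..<0} (\<lambda>t. prob {\<omega>\<in>space M. X \<omega> \<le> t})"
    by (rule nn_to_set_integral(1)[OF prob_meas_le[OF Xm] _ _ ppos(2) N]) auto
  have V2: "(LINT t:{..<0}|lborel. prob {\<omega>\<in>space M. X \<omega> \<le> t}) = expectation Xn"
    by (rule nn_to_set_integral(2)[OF prob_meas_le[OF Xm] _ _ ppos(2) N]) auto
  have "expectation X = expectation Xp - expectation Xn"
  proof -
    have "X = (\<lambda>\<omega>. Xp \<omega> - Xn \<omega>)" by (auto simp: Xp_def Xn_def fun_eq_iff)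
    then show ?thesis using Ip In by simp
  qed
  then show "expectation X = (LINT t:{0<..}|lborel. prob {\<omega>\<in>space M. t \<le> X \<omega>})
        - (LINT t:{..<0}|lborel. prob {\<omega>\<in>space M. X \<omega> \<le> t})"
    using V1 V2 by simp
qed

locale gauss_setup = prob_space M for M :: "'a measure" +
  fixes \<eta> :: "nat \<Rightarrow> 'a \<Rightarrow> real"
  assumes indep: "indep_vars (\<lambda>_. borel) \<eta> {1..}"
    and dist: "\<And>i. i \<ge> 1 \<Longrightarrow> distributed M lborel (\<eta> i) std_normal_density"
begin

lemma eta_meas[measurable]: "i \<ge> 1 \<Longrightarrow> \<eta> i \<in> borel_measurable M"
  using distributed_measurable[OF dist] by simp

lemma eta_int: "i \<ge> 1 \<Longrightarrow> integrable M (\<eta> i)"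
proof -
  assume i: "i \<ge> 1"
  have "integrable lborel (\<lambda>x. phi x * x)"
    using integrable_std_normal_moment[of 1] by simp
  then show ?thesis
    using distributed_integrable[OF dist[OF i], of "\<lambda>x. x"] by simp
qed

lemma prob_eta_set:
  assumes i: "i \<ge> 1" and A: "A \<in> sets borel"
  shows "prob (\<eta> i -` A \<inter> space M) = (LINT x:A|lborel. phi x)"
proof -
  have "emeasure M (\<eta> i -` A \<inter> space M) = (\<integral>\<^sup>+x. ennreal (phi x) * indicator A x \<partial>lborel)"
    using distributed_emeasure[OF dist[OF i], of A] A by simp
  also have "\<dots> = (\<integral>\<^sup>+x. ennreal (indicator A x * phi x) \<partial>lborel)"
    by (rule nn_integral_cong) (simp split: split_indicator)
  also have "\<dots> = ennreal (LINT x:A|lborel. phi x)"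
    unfolding set_lebesgue_integral_def
    by (simp, rule nn_integral_eq_integral) (use phi_int[OF A] in \<open>auto simp: set_integrable_def\<close>)
  finally show ?thesis
    by (simp add: emeasure_eq_measure set_lebesgue_integral_def)
qed

lemma Phi_set: "Phi t = (LINT x:{..<t}|lborel. phi x)"
  by (simp add: Phi_def interval_lebesgue_integral_def einterval_def lessThan_def)

lemma Phi_set': "Phi t = (LINT x:{..t}|lborel. phi x)"
  unfolding Phi_set
  by (rule set_integral_cong_set)
     (use AE_lborel_singleton[of t] in \<open>auto elim!: eventually_mono simp: set_borel_measurable_def
       intro!: borel_measurable_continuous_on_indicator phi_cont\<close>)

lemma prob_lt: "i \<ge> 1 \<Longrightarrow> prob (\<eta> i -` {..<t} \<inter> space M) = Phi t"
  by (simp add: prob_eta_set Phi_set)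

lemma prob_le: "i \<ge> 1 \<Longrightarrow> prob (\<eta> i -` {..t} \<inter> space M) = Phi t"
  by (simp add: prob_eta_set Phi_set')

lemma prob_abs_lt:
  assumes "i \<ge> 1" "t > 0"
  shows "prob (\<eta> i -` {-t<..<t} \<inter> space M) = 1 - 2 * Q t"
proof -
  have "Phi t = (LINT x:{..-t} \<union> {-t<..<t}|lborel. phi x)"
    unfolding Phi_set by (rule arg_cong[where f="\<lambda>A. set_lebesgue_integral lborel A phi"]) (use assms in auto)
  also have "\<dots> = Phi (-t) + (LINT x:{-t<..<t}|lborel. phi x)"
    by (subst set_integral_Un) (auto simp: phi_int Phi_set')
  finally show ?thesis
    using assms by (simp add: prob_eta_set Phi_reflect Q_def)
qed

lemma prob_inter:
  assumes I: "finite I" "I \<noteq> {}" "I \<subseteq> {1..}" and S: "S \<in> sets borel"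
  shows "prob (\<Inter>i\<in>I. \<eta> i -` S \<inter> space M) = (\<Prod>i\<in>I. prob (\<eta> i -` S \<inter> space M))"
  by (rule indep_varsD[OF indep]) (use I S in auto)

definition "Amax n \<omega> = Max ((\<lambda>i. \<bar>\<eta> i \<omega>\<bar>) ` {1..n})"
definition "Bmax n \<omega> = Max ((\<lambda>i. \<eta> i \<omega>) ` {1..2*n})"

lemma Amax_meas[measurable]: "Amax n \<in> borel_measurable M"
  unfolding Amax_def by measurable

lemma Bmax_meas[measurable]: "Bmax n \<in> borel_measurable M"
  unfolding Bmax_def by measurable

lemma sum_int: "integrable M (\<lambda>\<omega>. \<Sum>i\<in>{1..m}. \<bar>\<eta> i \<omega>\<bar>)"
  by (intro Bochner_Integration.integrable_sum integrable_abs eta_int) auto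

lemma Amax_int: assumes "n \<ge> 1" shows "integrable M (Amax n)"
proof (rule Bochner_Integration.integrable_bound[OF sum_int[of n]])
  show "AE x in M. norm (Amax n x) \<le> norm (\<Sum>i\<in>{1..n}. \<bar>\<eta> i x\<bar>)"
  proof (intro AE_I2)
    fix x
    have ne: "(\<lambda>i. \<bar>\<eta> i x\<bar>) ` {1..n} \<noteq> {}" using assms by auto
    obtain j where j: "j \<in> {1..n}" "Amax n x = \<bar>\<eta> j x\<bar>"
      using Max_in[OF _ ne] unfolding Amax_def by auto
    have "\<bar>\<eta> j x\<bar> \<le> (\<Sum>i\<in>{1..n}. \<bar>\<eta> i x\<bar>)"
      by (rule member_le_sum) (use j in auto)
    then show "norm (Amax n x) \<le> norm (\<Sum>i\<in>{1..n}. \<bar>\<eta> i x\<bar>)" using j by simp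
  qed
qed simp

lemma Bmax_int: assumes "n \<ge> 1" shows "integrable M (Bmax n)"
proof (rule Bochner_Integration.integrable_bound[OF sum_int[of "2*n"]])
  show "AE x in M. norm (Bmax n x) \<le> norm (\<Sum>i\<in>{1..2*n}. \<bar>\<eta> i x\<bar>)"
  proof (intro AE_I2)
    fix x
    have ne: "(\<lambda>i. \<eta> i x) ` {1..2*n} \<noteq> {}" using assms by auto
    obtain j where j: "j \<in> {1..2*n}" "Bmax n x = \<eta> j x"
      using Max_in[OF _ ne] unfolding Bmax_def by auto
    have "\<bar>\<eta> j x\<bar> \<le> (\<Sum>i\<in>{1..2*n}. \<bar>\<eta> i x\<bar>)"
      by (rule member_le_sum) (use j in auto)
    then show "norm (Bmax n x) \<le> norm (\<Sum>i\<in>{1..2*n}. \<bar>\<eta> i x\<bar>)" using j by simp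
  qed
qed simp

lemma Bmax_le: assumes "n \<ge> 1" shows "prob {\<omega>\<in>space M. Bmax n \<omega> \<le> t} = Phi t ^ (2*n)"
proof -
  have "{\<omega>\<in>space M. Bmax n \<omega> \<le> t} = (\<Inter>i\<in>{1..2*n}. \<eta> i -` {..t} \<inter> space M)"
    using assms by (auto simp: Bmax_def)
  then show ?thesis
    using prob_inter[of "{1..2*n}" "{..t}"] assms by (simp add: prob_le)
qed

lemma Bmax_ge: assumes "n \<ge> 1" shows "prob {\<omega>\<in>space M. t \<le> Bmax n \<omega>} = 1 - Phi t ^ (2*n)"
proof -
  have "{\<omega>\<in>space M. Bmax n \<omega> < t} = (\<Inter>i\<in>{1..2*n}. \<eta> i -` {..<t} \<inter> space M)"
    using assms by (auto simp: Bmax_def)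
  then have "prob {\<omega>\<in>space M. Bmax n \<omega> < t} = Phi t ^ (2*n)"
    using prob_inter[of "{1..2*n}" "{..<t}"] assms by (simp add: prob_lt)
  moreover have "{\<omega>\<in>space M. t \<le> Bmax n \<omega>} = space M - {\<omega>\<in>space M. Bmax n \<omega> < t}" by auto
  ultimately show ?thesis by (simp add: prob_compl)
qed

lemma Amax_ge: assumes "n \<ge> 1" "t > 0" shows "prob {\<omega>\<in>space M. t \<le> Amax n \<omega>} = 1 - (1 - 2 * Q t) ^ n"
proof -
  have "{\<omega>\<in>space M. Amax n \<omega> < t} = (\<Inter>i\<in>{1..n}. \<eta> i -` {-t<..<t} \<inter> space M)"
    using assms by (auto simp: Amax_def abs_less_iff)
  then have "prob {\<omega>\<in>space M. Amax n \<omega> < t} = (1 - 2 * Q t) ^ n"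
    using prob_inter[of "{1..n}" "{-t<..<t}"] assms by (simp add: prob_abs_lt)
  moreover have "{\<omega>\<in>space M. t \<le> Amax n \<omega>} = space M - {\<omega>\<in>space M. Amax n \<omega> < t}" by auto
  ultimately show ?thesis by (simp add: prob_compl)
qed

lemma Amax_le: assumes "n \<ge> 1" "t < 0" shows "prob {\<omega>\<in>space M. Amax n \<omega> \<le> t} = 0"
proof -
  have "{\<omega>\<in>space M. Amax n \<omega> \<le> t} = {}"
  proof (safe)
    fix x assume "x \<in> space M" "Amax n x \<le> t"
    have "\<bar>\<eta> 1 x\<bar> \<le> Amax n x" unfolding Amax_def by (rule Max_ge) (use assms in auto)
    then show "x \<in> {}" using \<open>Amax n x \<le> t\<close> assms by linarith
  qed
  then show ?thesis by (simp only: measure_empty)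
qed

end

lemma pow_diff_bounds:
  fixes A B :: real
  assumes "0 \<le> B" "B \<le> A"
  shows "real (Suc m) * (A - B) * B ^ m \<le> A ^ Suc m - B ^ Suc m \<and> A ^ Suc m - B ^ Suc m \<le> real (Suc m) * (A - B) * A ^ m"
proof (induction m)
  case 0 then show ?case by simp
next
  case (Suc m)
  have e: "A ^ Suc (Suc m) - B ^ Suc (Suc m) = A * (A ^ Suc m - B ^ Suc m) + B ^ Suc m * (A - B)"
    by (simp add: algebra_simps)
  have A0: "0 \<le> A" using assms by linarith
  have BA: "B ^ Suc m \<le> A ^ Suc m" using assms by (intro power_mono) auto
  have up: "A * (A ^ Suc m - B ^ Suc m) \<le> A * (real (Suc m) * (A - B) * A ^ m)"
    using Suc A0 by (intro mult_left_mono) auto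
  have lo: "B * (real (Suc m) * (A - B) * B ^ m) \<le> A * (A ^ Suc m - B ^ Suc m)"
  proof -
    have "B * (real (Suc m) * (A - B) * B ^ m) \<le> B * (A ^ Suc m - B ^ Suc m)"
      using Suc assms by (intro mult_left_mono) auto
    also have "\<dots> \<le> A * (A ^ Suc m - B ^ Suc m)"
      using assms BA by (intro mult_right_mono) auto
    finally show ?thesis .
  qed
  have t1: "B ^ Suc m * (A - B) \<le> A ^ Suc m * (A - B)" using BA assms by (intro mult_right_mono) auto
  show ?case
  proof
    show "real (Suc (Suc m)) * (A - B) * B ^ Suc m \<le> A ^ Suc (Suc m) - B ^ Suc (Suc m)"
      unfolding e using lo by (simp add: algebra_simps)
    show "A ^ Suc (Suc m) - B ^ Suc (Suc m) \<le> real (Suc (Suc m)) * (A - B) * A ^ Suc m"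
      unfolding e using up t1 by (simp add: algebra_simps)
  qed
qed

lemma one_minus_le_exp_pow:
  fixes x :: real assumes "x \<le> 1"
  shows "(1 - x) ^ m \<le> exp (- (real m * x))"
proof -
  have "(1 - x) ^ m \<le> exp (-x) ^ m"
    using assms by (intro power_mono) (auto simp: exp_ge_add_one_self[of "-x", simplified])
  then show ?thesis by (simp add: exp_of_nat_mult[symmetric])
qed

lemma pw_basic:
  fixes x :: real assumes x: "0 \<le> x" "x \<le> 1/2" and n: "n \<ge> 1"
  shows "real n * x^2 * (1 - 2*x) ^ (n - 1) \<le> (1 - x) ^ (2*n) - (1 - 2*x) ^ n"
    "(1 - x) ^ (2*n) - (1 - 2*x) ^ n \<le> real n * x^2 * (1 - x) ^ (2*n - 2)"
proof -
  obtain m where m: "n = Suc m" using n by (cases n) auto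
  have A: "(1 - x) ^ (2*n) = ((1-x)^2) ^ n" by (simp add: power_mult)
  have B: "(1 - x) ^ (2*n - 2) = ((1-x)^2) ^ m" by (simp add: m power_mult[symmetric])
  have "0 \<le> 1 - 2*x" "1 - 2*x \<le> (1-x)^2" using x by (auto simp: power2_eq_square algebra_simps)
  from pow_diff_bounds[OF this, of m]
  show "real n * x^2 * (1 - 2*x) ^ (n - 1) \<le> (1 - x) ^ (2*n) - (1 - 2*x) ^ n"
    "(1 - x) ^ (2*n) - (1 - 2*x) ^ n \<le> real n * x^2 * (1 - x) ^ (2*n - 2)"
    unfolding A B using m by (simp_all add: power2_eq_square algebra_simps)
qed

lemma pw1: fixes x :: real assumes "0 \<le> x" "x \<le> 1/2" "n \<ge> 1"
  shows "0 \<le> (1 - x) ^ (2*n) - (1 - 2*x) ^ n"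
proof -
  have "0 \<le> real n * x^2 * (1 - 2*x) ^ (n - 1)" using assms by simp
  with pw_basic(1)[OF assms] show ?thesis by linarith
qed

lemma pw2: fixes x :: real assumes "0 \<le> x" "x \<le> 1/2"
  shows "(1 - x) ^ (2*n) - (1 - 2*x) ^ n \<le> exp (- (2 * real n * x))"
proof -
  have "(1 - x) ^ (2*n) \<le> exp (- (real (2*n) * x))" using assms by (intro one_minus_le_exp_pow) auto
  moreover have "0 \<le> (1 - 2*x) ^ n" using assms by auto
  ultimately show ?thesis by simp
qed

lemma pw3: fixes x :: real assumes "0 \<le> x" "x \<le> 1/2" "n \<ge> 1"
  shows "(1 - x) ^ (2*n) - (1 - 2*x) ^ n \<le> real n * x^2 * exp (- ((2 * real n - 2) * x))"
proof -
  have "(1 - x) ^ (2*n - 2) \<le> exp (- (real (2*n - 2) * x))" using assms by (intro one_minus_le_exp_pow) auto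
  also have "real (2*n - 2) = 2 * real n - 2" using assms by (simp add: of_nat_diff)
  finally have "real n * x^2 * (1 - x) ^ (2*n - 2) \<le> real n * x^2 * exp (- ((2 * real n - 2) * x))"
    by (intro mult_left_mono) auto
  with pw_basic(2)[OF assms] show ?thesis by linarith
qed

lemma pw3': fixes x :: real assumes "0 \<le> x" "x \<le> 1/2" "n \<ge> 1"
  shows "(1 - x) ^ (2*n) - (1 - 2*x) ^ n \<le> real n * x^2"
proof -
  have "(1 - x) ^ (2*n - 2) \<le> 1" using assms by (intro power_le_one) auto
  then have "real n * x^2 * (1 - x) ^ (2*n - 2) \<le> real n * x^2 * 1" by (intro mult_left_mono) auto
  with pw_basic(2)[OF assms] show ?thesis by linarith
qed

lemma pw4: fixes x :: real assumes "0 \<le> x" "x \<le> 1/4" "n \<ge> 1"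
  shows "real n * x^2 * exp (- (2 * real n * x + 8 * real n * x^2)) \<le> (1 - x) ^ (2*n) - (1 - 2*x) ^ n"
proof -
  have "- (2*x) - 2 * (2*x)^2 \<le> ln (1 - 2*x)" using assms by (intro ln_one_minus_pos_lower_bound) auto
  moreover have pos: "0 < 1 - 2*x" using assms by simp
  ultimately have "exp (- (2*x) - 2 * (2*x)^2) \<le> exp (ln (1 - 2*x))" by (simp only: exp_le_cancel_iff)
  then have "exp (- (2*x) - 2 * (2*x)^2) \<le> 1 - 2*x" using exp_ln[OF pos] by simp
  then have "exp (- (2*x) - 2 * (2*x)^2) ^ n \<le> (1 - 2*x) ^ n" by (intro power_mono) auto
  moreover have "exp (- (2*x) - 2 * (2*x)^2) ^ n = exp (- (2 * real n * x + 8 * real n * x^2))"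
    by (simp add: exp_of_nat_mult[symmetric] algebra_simps power2_eq_square)
  moreover have "(1 - 2*x) ^ n \<le> (1 - 2*x) ^ (n - 1)"
    using assms by (intro power_decreasing) auto
  ultimately have "exp (- (2 * real n * x + 8 * real n * x^2)) \<le> (1 - 2*x) ^ (n - 1)" by linarith
  then have "real n * x^2 * exp (- (2 * real n * x + 8 * real n * x^2)) \<le> real n * x^2 * (1 - 2*x) ^ (n - 1)"
    by (intro mult_left_mono) auto
  with pw_basic(1)[of x n] assms show ?thesis by linarith
qed

lemma pw5: fixes x :: real assumes "0 \<le> x" "x \<le> 1/2"
  shows "0 \<le> 1 - (1 - x) ^ (2*n)" "1 - (1 - x) ^ (2*n) \<le> 2 * real n * x"
proof -
  show "0 \<le> 1 - (1 - x) ^ (2*n)" using assms by (simp add: power_le_one)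
  have "1 + real (2*n) * (-x) \<le> (1 + (-x)) ^ (2*n)" using assms by (intro Bernoulli_inequality) auto
  then show "1 - (1 - x) ^ (2*n) \<le> 2 * real n * x" by simp
qed

lemma pw6: fixes x :: real assumes "0 \<le> x" "x \<le> 1/2"
  shows "1 - exp (- (2 * real n * x)) \<le> 1 - (1 - x) ^ (2*n)"
  using one_minus_le_exp_pow[of x "2*n"] assms by simp

definition "qlo x = phi x * x / (1 + x^2)"
definition "qhi x = phi x / x"
definition "Gk k t = (Q t / k + 1 / k^2) * exp (- k * Q t)"
definition "fI n t = (1 - Q t) ^ (2*n) - (1 - 2 * Q t) ^ n"
definition "fJ n t = 1 - (1 - Q t) ^ (2*n)"

lemma Q_half: "t \<ge> 0 \<Longrightarrow> Q t \<le> 1/2"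
  using Q_mono[of 0 t] Q_zero by simp

lemma Q_nonneg: "0 \<le> Q t" using Q_pos[of t] by simp

lemma phi_isCont: "isCont phi x"
  using phi_deriv DERIV_isCont by blast

lemma Q_contI: "continuous_on A Q"
  by (intro continuous_at_imp_continuous_on ballI Q_cont)

lemma Gk_deriv: assumes "k > 0"
  shows "DERIV (Gk k) t :> Q t * phi t * exp (- k * Q t)"
proof -
  have "DERIV (\<lambda>t. (Q t / k + 1 / k^2) * exp (- k * Q t)) t :>
      (- phi t / k) * exp (- k * Q t) + (Q t / k + 1 / k^2) * (exp (- k * Q t) * (- k * (- phi t)))"
    using assms by (auto intro!: derivative_eq_intros Q_deriv)
  also have "(- phi t / k) * exp (- k * Q t) + (Q t / k + 1 / k^2) * (exp (- k * Q t) * (- k * (- phi t)))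
      = Q t * phi t * exp (- k * Q t)"
    using assms by (simp add: field_simps power2_eq_square)
  finally show ?thesis unfolding Gk_def[abs_def] .
qed

lemma win_ftc:
  assumes "k > 0" "a \<le> b"
  shows "set_integrable lborel {a<..b} (\<lambda>t. Q t * phi t * exp (- k * Q t))"
    "(LINT t:{a<..b}|lborel. Q t * phi t * exp (- k * Q t)) = Gk k b - Gk k a"
proof -
  have c: "continuous_on {a..b} (\<lambda>t. Q t * phi t * exp (- k * Q t))"
    by (intro continuous_intros Q_contI phi_cont)
  show "set_integrable lborel {a<..b} (\<lambda>t. Q t * phi t * exp (- k * Q t))"
    by (rule set_integrable_subset[OF borel_integrable_atLeastAtMost'[OF c]]) auto
  have "(LBINT t=ereal a..ereal b. Q t * phi t * exp (- k * Q t)) = Gk k b - Gk k a"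
  proof (rule interval_integral_FTC_finite)
    show "continuous_on {min a b..max a b} (\<lambda>t. Q t * phi t * exp (- k * Q t))"
      using c assms by (simp add: min_def max_def)
    fix t assume "min a b \<le> t" "t \<le> max a b"
    show "(Gk k has_vector_derivative (Q t * phi t * exp (- k * Q t))) (at t within {min a b..max a b})"
      unfolding has_real_derivative_iff_has_vector_derivative[symmetric]
      by (rule has_field_derivative_at_within[OF Gk_deriv[OF assms(1)]])
  qed
  then show "(LINT t:{a<..b}|lborel. Q t * phi t * exp (- k * Q t)) = Gk k b - Gk k a"
    using assms by (simp add: interval_integral_Ioc)
qed

lemma Q_lim: "(Q \<longlongrightarrow> 0) at_top"
proof (rule tendsto_sandwich[of "\<lambda>_. 0" _ _ "\<lambda>x. phi x / x"])
  show "eventually (\<lambda>x. 0 \<le> Q x) at_top" by (simp add: Q_nonneg)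
  show "eventually (\<lambda>x. Q x \<le> phi x / x) at_top"
    using eventually_gt_at_top[of 0] by eventually_elim (rule Q_upper)
  show "((\<lambda>x. phi x / x) \<longlongrightarrow> 0) at_top" unfolding normal_density_def by real_asymp
qed simp

lemma tail_Qphi:
  assumes "b \<ge> 0"
  shows "set_integrable lborel {b<..} (\<lambda>t. Q t * phi t)" "(LINT t:{b<..}|lborel. Q t * phi t) = Q b ^ 2 / 2"
proof -
  have d: "DERIV (\<lambda>t. - (Q t ^ 2 / 2)) x :> Q x * phi x" for x
    by (auto intro!: derivative_eq_intros Q_deriv simp: power2_eq_square)
  have lim: "((\<lambda>t. - (Q t ^ 2 / 2)) \<longlongrightarrow> 0) at_top"
    using tendsto_mult[OF Q_lim Q_lim] by (auto intro!: tendsto_eq_intros Q_lim)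
  show "set_integrable lborel {b<..} (\<lambda>t. Q t * phi t)" "(LINT t:{b<..}|lborel. Q t * phi t) = Q b ^ 2 / 2"
    using FTC_Ioi[of b "\<lambda>t. - (Q t ^ 2 / 2)" "\<lambda>t. Q t * phi t" 0, OF d _ _ lim]
    by (auto intro!: continuous_intros Q_cont phi_isCont simp: Q_nonneg phi_pos less_imp_le simp del: Q_def)
qed

lemma const_int: assumes "0 \<le> a" shows "(LINT t:{0<..a}|lborel. (c::real)) = a * c"
  using assms by (subst set_integral_const) auto

lemma split3:
  fixes f :: "real \<Rightarrow> real"
  assumes "0 < a" "a \<le> b" and fint: "set_integrable lborel {0<..} f"
  shows "(LINT t:{0<..}|lborel. f t) = (LINT t:{0<..a}|lborel. f t) + (LINT t:{a<..b}|lborel. f t) + (LINT t:{b<..}|lborel. f t)"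
    "set_integrable lborel {0<..a} f" "set_integrable lborel {a<..b} f" "set_integrable lborel {b<..} f"
proof -
  show i1: "set_integrable lborel {0<..a} f" by (rule set_integrable_subset[OF fint]) auto
  show i2: "set_integrable lborel {a<..b} f" by (rule set_integrable_subset[OF fint]) (use assms in auto)
  show i3: "set_integrable lborel {b<..} f" by (rule set_integrable_subset[OF fint]) (use assms in auto)
  have i23: "set_integrable lborel ({a<..b} \<union> {b<..}) f" by (rule set_integrable_subset[OF fint]) (use assms in auto)
  have "{0<..} = {0<..a} \<union> ({a<..b} \<union> {b<..})" using assms by auto
  then have "(LINT t:{0<..}|lborel. f t) = (LINT t:{0<..a} \<union> ({a<..b} \<union> {b<..})|lborel. f t)"
    by simp
  also have "\<dots> = (LINT t:{0<..a}|lborel. f t) + (LINT t:{a<..b} \<union> {b<..}|lborel. f t)"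
    by (rule set_integral_Un) (use i1 i23 assms in auto)
  also have "(LINT t:{a<..b} \<union> {b<..}|lborel. f t) = (LINT t:{a<..b}|lborel. f t) + (LINT t:{b<..}|lborel. f t)"
    by (rule set_integral_Un) (use i2 i3 assms in auto)
  finally show "(LINT t:{0<..}|lborel. f t) = (LINT t:{0<..a}|lborel. f t) + (LINT t:{a<..b}|lborel. f t) + (LINT t:{b<..}|lborel. f t)"
    by simp
qed

lemma I_upper:
  fixes n :: nat and a b :: real
  assumes n: "n \<ge> 2" and ab: "1 \<le> a" "a \<le> b" and fint: "set_integrable lborel {0<..} (fI n)"
  shows "(LINT t:{0<..}|lborel. fI n t) \<le> a * exp (- (2 * real n * qlo a))
     + (n / a) * (qhi b / (2 * real n - 2) + 1/(2 * real n - 2)^2) + (n / b) * (qhi b ^ 2 / 2)"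
proof -
  define k where "k = 2 * real n - 2"
  have k: "k > 0" using n by (simp add: k_def)
  have a0: "0 < a" using ab by simp
  note S = split3[OF a0 ab(2) fint]
  have B1: "(LINT t:{0<..a}|lborel. fI n t) \<le> a * exp (- (2 * real n * qlo a))"
  proof -
    have "(LINT t:{0<..a}|lborel. fI n t) \<le> (LINT t:{0<..a}|lborel. exp (- (2 * real n * qlo a)))"
    proof (rule set_integral_mono[OF S(2)])
      show "set_integrable lborel {0<..a} (\<lambda>t. exp (- (2 * real n * qlo a)))"
        by (rule set_integrable_subset[OF borel_integrable_atLeastAtMost'[of 0 a]]) auto
      fix t assume t: "t \<in> {0<..a}"
      have "fI n t \<le> exp (- (2 * real n * Q t))"
        unfolding fI_def using t Q_half[of t] Q_nonneg[of t] by (intro pw2) auto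
      also have "\<dots> \<le> exp (- (2 * real n * qlo a))"
      proof -
        have "qlo a \<le> Q a" using Q_lower[OF a0] by (simp add: qlo_def)
        also have "Q a \<le> Q t" using t by (intro Q_mono) auto
        finally show ?thesis by (simp add: mult_left_mono)
      qed
      finally show "fI n t \<le> exp (- (2 * real n * qlo a))" .
    qed
    also have "\<dots> = a * exp (- (2 * real n * qlo a))" using a0 by (simp add: const_int)
    finally show ?thesis .
  qed
  have B2: "(LINT t:{a<..b}|lborel. fI n t) \<le> (n / a) * (qhi b / k + 1/k^2)"
  proof -
    have "(LINT t:{a<..b}|lborel. fI n t) \<le> (LINT t:{a<..b}|lborel. (n / a) * (Q t * phi t * exp (- k * Q t)))"
    proof (rule set_integral_mono[OF S(3)])
      show "set_integrable lborel {a<..b} (\<lambda>t. (n / a) * (Q t * phi t * exp (- k * Q t)))"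
        by (intro set_integrable_mult_right win_ftc k ab)
      fix t assume t: "t \<in> {a<..b}"
      then have t0: "t > 0" using a0 by auto
      have "fI n t \<le> real n * Q t ^ 2 * exp (- ((2 * real n - 2) * Q t))"
        unfolding fI_def using t0 n Q_half[of t] Q_nonneg[of t] by (intro pw3) auto
      also have "\<dots> = real n * Q t * Q t * exp (- k * Q t)" by (simp add: k_def power2_eq_square algebra_simps)
      also have "\<dots> \<le> real n * Q t * (phi t / a) * exp (- k * Q t)"
      proof -
        have "Q t \<le> phi t / t" by (rule Q_upper[OF t0])
        also have "\<dots> \<le> phi t / a" using t a0 phi_pos[of t] by (intro divide_left_mono) auto
        finally show ?thesis by (intro mult_right_mono mult_left_mono) (auto simp: Q_nonneg)
      qed
      also have "\<dots> = (n / a) * (Q t * phi t * exp (- k * Q t))" by simp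
      finally show "fI n t \<le> (n / a) * (Q t * phi t * exp (- k * Q t))" .
    qed
    also have "\<dots> = (n / a) * (Gk k b - Gk k a)"
      using win_ftc(2)[OF k ab(2)] by (simp add: set_integral_mult_right)
    also have "\<dots> \<le> (n / a) * (qhi b / k + 1/k^2)"
    proof (intro mult_left_mono)
      have "0 \<le> Gk k a" unfolding Gk_def using k by (simp add: Q_nonneg)
      moreover have "Gk k b \<le> qhi b / k + 1/k^2"
      proof -
        have "exp (- k * Q b) \<le> 1" using k by (simp add: Q_nonneg)
        moreover have "0 \<le> Q b / k + 1 / k^2" using k by (simp add: Q_nonneg)
        ultimately have "Gk k b \<le> Q b / k + 1/k^2" unfolding Gk_def
          using mult_left_mono[of "exp (- k * Q b)" 1 "Q b / k + 1 / k^2"] by simp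
        also have "Q b \<le> qhi b" using Q_upper[of b] ab by (simp add: qhi_def)
        then have "Q b / k + 1/k^2 \<le> qhi b / k + 1/k^2" using k by (simp add: divide_right_mono)
        finally show ?thesis .
      qed
      ultimately show "Gk k b - Gk k a \<le> qhi b / k + 1/k^2" by simp
    qed (use a0 in simp)
    finally show ?thesis .
  qed
  have B3: "(LINT t:{b<..}|lborel. fI n t) \<le> (n / b) * (qhi b ^ 2 / 2)"
  proof -
    have b0: "b > 0" using ab by simp
    have "(LINT t:{b<..}|lborel. fI n t) \<le> (LINT t:{b<..}|lborel. (n / b) * (Q t * phi t))"
    proof (rule set_integral_mono[OF S(4)])
      show "set_integrable lborel {b<..} (\<lambda>t. (n / b) * (Q t * phi t))"
        using tail_Qphi(1)[of b] b0 by (intro set_integrable_mult_right) auto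
      fix t assume t: "t \<in> {b<..}"
      then have t0: "t > 0" using b0 by auto
      have "fI n t \<le> real n * Q t ^ 2"
        unfolding fI_def using t0 n Q_half[of t] Q_nonneg[of t] by (intro pw3') auto
      also have "\<dots> = real n * Q t * Q t" by (simp add: power2_eq_square)
      also have "\<dots> \<le> real n * Q t * (phi t / b)"
      proof -
        have "Q t \<le> phi t / t" by (rule Q_upper[OF t0])
        also have "\<dots> \<le> phi t / b" using t b0 phi_pos[of t] by (intro divide_left_mono) auto
        finally show ?thesis by (intro mult_left_mono) (auto simp: Q_nonneg)
      qed
      also have "\<dots> = (n / b) * (Q t * phi t)" by simp
      finally show "fI n t \<le> (n / b) * (Q t * phi t)" .
    qed
    also have "\<dots> = (n / b) * (Q b ^ 2 / 2)"
      using tail_Qphi(2)[of b] b0 by (simp only: set_integral_mult_right)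
    also have "\<dots> \<le> (n / b) * (qhi b ^ 2 / 2)"
    proof -
      have "Q b \<le> qhi b" using Q_upper[OF b0] by (simp add: qhi_def)
      then have "Q b ^ 2 \<le> qhi b ^ 2" by (intro power_mono) (auto simp: Q_nonneg)
      then show ?thesis using b0 by (intro mult_left_mono) auto
    qed
    finally show ?thesis .
  qed
  show ?thesis using S(1) B1 B2 B3 unfolding k_def by linarith
qed

lemma set_int_nonneg:
  fixes f :: "real \<Rightarrow> real"
  assumes "set_integrable lborel A f" "\<And>t. t \<in> A \<Longrightarrow> 0 \<le> f t"
  shows "0 \<le> (LINT t:A|lborel. f t)"
proof -
  have "(LINT t:A|lborel. (0::real)) \<le> (LINT t:A|lborel. f t)"
    by (rule set_integral_mono) (use assms in \<open>auto simp: set_integrable_def\<close>)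
  then show ?thesis by (simp add: set_lebesgue_integral_def)
qed

lemma ratio_mono: fixes t b :: real assumes "1 \<le> t" "t \<le> b" shows "b / (1 + b^2) \<le> t / (1 + t^2)"
proof -
  have "b * (1 + t^2) \<le> t * (1 + b^2)"
  proof -
    have "b * (1 + t^2) - t * (1 + b^2) = (b - t) * (1 - t * b)" by (simp add: algebra_simps power2_eq_square)
    moreover have "(b - t) * (1 - t * b) \<le> 0"
    proof (rule mult_nonneg_nonpos)
      show "0 \<le> b - t" using assms by simp
      have "1 * 1 \<le> t * b" using assms by (intro mult_mono) auto
      then show "1 - t * b \<le> 0" by simp
    qed
    ultimately show ?thesis by simp
  qed
  then show ?thesis using assms by (simp add: field_simps add_pos_nonneg)
qed

lemma I_lower:
  fixes n :: nat and a b :: real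
  assumes n: "n \<ge> 1" and ab: "1 \<le> a" "a \<le> b" and qa: "qhi a \<le> 1/4"
    and fint: "set_integrable lborel {0<..} (fI n)"
  shows "exp (- (8 * real n * qhi a ^ 2)) * (b / (1 + b^2)) * real n *
      (exp (- (2 * real n * qhi b)) / (2 * real n)^2 - (1 / (2 * (2 * real n)) + 1 / (2 * real n)^2) * exp (- (2 * real n * qlo a)))
    \<le> (LINT t:{0<..}|lborel. fI n t)"
proof -
  define k where "k = 2 * real n"
  define c where "c = exp (- (8 * real n * qhi a ^ 2)) * (b / (1 + b^2))"
  have k: "k > 0" using n by (simp add: k_def)
  have a0: "0 < a" using ab by simp
  have c0: "0 \<le> c" using ab by (simp add: c_def)
  note S = split3[OF a0 ab(2) fint]
  have fI0: "0 \<le> fI n t" if "t > 0" for t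
    unfolding fI_def using that n Q_half[of t] Q_nonneg[of t] by (intro pw1) auto
  have P1: "0 \<le> (LINT t:{0<..a}|lborel. fI n t)" by (rule set_int_nonneg[OF S(2)]) (auto intro: fI0)
  have P3: "0 \<le> (LINT t:{b<..}|lborel. fI n t)" by (rule set_int_nonneg[OF S(4)]) (use a0 ab in \<open>auto intro: fI0\<close>)
  have "(LINT t:{a<..b}|lborel. c * real n * (Q t * phi t * exp (- k * Q t))) \<le> (LINT t:{a<..b}|lborel. fI n t)"
  proof (rule set_integral_mono[OF _ S(3)])
    show "set_integrable lborel {a<..b} (\<lambda>t. c * real n * (Q t * phi t * exp (- k * Q t)))"
      by (intro set_integrable_mult_right win_ftc k ab)
    fix t assume t: "t \<in> {a<..b}"
    then have t0: "t > 0" and t1: "1 \<le> t" using ab by auto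
    have Qa: "Q t \<le> qhi a"
    proof -
      have "Q t \<le> Q a" using t by (intro Q_mono) auto
      also have "\<dots> \<le> qhi a" using Q_upper[OF a0] by (simp add: qhi_def)
      finally show ?thesis .
    qed
    have "real n * Q t ^ 2 * exp (- (k * Q t + 8 * real n * Q t ^ 2)) \<le> fI n t"
      unfolding fI_def k_def using n Q_nonneg[of t] Qa qa by (intro pw4) auto
    moreover have "c * real n * (Q t * phi t * exp (- k * Q t)) \<le> real n * Q t ^ 2 * exp (- (k * Q t + 8 * real n * Q t ^ 2))"
    proof -
      have e1: "exp (- (8 * real n * qhi a ^ 2)) \<le> exp (- (8 * real n * Q t ^ 2))"
        using Qa Q_nonneg[of t] by (simp add: power_mono mult_left_mono)
      have e2: "phi t * (b / (1 + b^2)) \<le> Q t"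
      proof -
        have "phi t * (b / (1 + b^2)) \<le> phi t * (t / (1 + t^2))"
          using ratio_mono[OF t1] t phi_pos[of t] by (intro mult_left_mono) auto
        also have "\<dots> \<le> Q t" using Q_lower[OF t0] by simp
        finally show ?thesis .
      qed
      have "c * real n * (Q t * phi t * exp (- k * Q t))
          = real n * Q t * exp (- k * Q t) * (exp (- (8 * real n * qhi a ^ 2)) * (phi t * (b / (1 + b^2))))"
        by (simp add: c_def algebra_simps)
      also have "\<dots> \<le> real n * Q t * exp (- k * Q t) * (exp (- (8 * real n * Q t ^ 2)) * Q t)"
        using e1 e2 ab phi_pos[of t] Q_nonneg[of t]
        by (intro mult_left_mono mult_mono) (auto simp: add_pos_nonneg)
      also have "\<dots> = real n * Q t ^ 2 * exp (- (k * Q t + 8 * real n * Q t ^ 2))"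
      proof -
        have E: "exp (- (k * Q t + 8 * real n * Q t ^ 2)) = exp (- k * Q t) * exp (- (8 * real n * Q t ^ 2))"
          by (subst exp_add[symmetric]) simp
        show ?thesis unfolding E by (simp add: power2_eq_square mult_ac)
      qed
      finally show ?thesis .
    qed
    ultimately show "c * real n * (Q t * phi t * exp (- k * Q t)) \<le> fI n t" by linarith
  qed
  moreover have "(LINT t:{a<..b}|lborel. c * real n * (Q t * phi t * exp (- k * Q t))) = c * real n * (Gk k b - Gk k a)"
    using win_ftc(2)[OF k ab(2)] by (simp add: set_integral_mult_right)
  moreover have "c * real n * (exp (- (k * qhi b)) / k^2 - (1 / (2 * k) + 1 / k^2) * exp (- (k * qlo a))) \<le> c * real n * (Gk k b - Gk k a)"
  proof (rule mult_left_mono)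
    have b0: "0 < b" using ab by simp
    have "exp (- (k * qhi b)) / k^2 \<le> Gk k b"
    proof -
      have "Q b \<le> qhi b" using Q_upper[OF b0] by (simp add: qhi_def)
      then have "exp (- (k * qhi b)) \<le> exp (- k * Q b)" using k by simp
      then have "exp (- (k * qhi b)) / k^2 \<le> exp (- k * Q b) / k^2" by (simp add: divide_right_mono)
      also have "\<dots> \<le> (Q b / k + 1 / k^2) * exp (- k * Q b)"
        using k Q_nonneg[of b] by (simp add: field_simps)
      finally show ?thesis by (simp add: Gk_def)
    qed
    moreover have "Gk k a \<le> (1 / (2 * k) + 1 / k^2) * exp (- (k * qlo a))"
    proof -
      have "Q a / k \<le> 1 / (2 * k)" using Q_half[of a] a0 k by (simp add: field_simps)
      then have h1: "Q a / k + 1 / k^2 \<le> 1 / (2 * k) + 1 / k^2" by simp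
      have "qlo a \<le> Q a" using Q_lower[OF a0] by (simp add: qlo_def)
      then have h2: "exp (- k * Q a) \<le> exp (- (k * qlo a))" using k by simp
      show ?thesis unfolding Gk_def using h1 h2 k Q_nonneg[of a]
        by (intro mult_mono) auto
    qed
    ultimately show "exp (- (k * qhi b)) / k^2 - (1 / (2 * k) + 1 / k^2) * exp (- (k * qlo a)) \<le> Gk k b - Gk k a"
      by simp
  qed (use c0 in simp)
  ultimately show ?thesis using S(1) P1 P3 unfolding c_def k_def by linarith
qed

lemma J_upper:
  fixes n :: nat and b :: real
  assumes b: "1 \<le> b" and gint: "set_integrable lborel {0<..} (fJ n)"
  shows "(LINT t:{0<..}|lborel. fJ n t) \<le> b + 2 * real n * phi b / b^2"
proof -
  have b0: "0 < b" using b by simp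
  note S = split3[OF b0 order_refl gint]
  have P1: "(LINT t:{0<..b}|lborel. fJ n t) \<le> b"
  proof -
    have "(LINT t:{0<..b}|lborel. fJ n t) \<le> (LINT t:{0<..b}|lborel. 1)"
    proof (rule set_integral_mono[OF S(2)])
      show "set_integrable lborel {0<..b} (\<lambda>t. 1::real)"
        by (rule set_integrable_subset[OF borel_integrable_atLeastAtMost'[of 0 b]]) auto
      fix t assume "t \<in> {0<..b}"
      show "fJ n t \<le> 1" unfolding fJ_def using Q_half[of t] Q_nonneg[of t] \<open>t \<in> {0<..b}\<close> by simp
    qed
    then show ?thesis using b0 by (simp add: const_int)
  qed
  have P3: "(LINT t:{b<..}|lborel. fJ n t) \<le> 2 * real n * phi b / b^2"
  proof -
    have "(LINT t:{b<..}|lborel. fJ n t) \<le> (LINT t:{b<..}|lborel. (2 * real n / b^2) * (t * phi t))"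
    proof (rule set_integral_mono[OF S(4)])
      show "set_integrable lborel {b<..} (\<lambda>t. (2 * real n / b^2) * (t * phi t))"
        using int_tphi(1)[of b] b0 by (intro set_integrable_mult_right) auto
      fix t assume t: "t \<in> {b<..}"
      then have t0: "t > 0" using b0 by auto
      have "fJ n t \<le> 2 * real n * Q t" unfolding fJ_def using Q_half[of t] Q_nonneg[of t] t0 by (intro pw5(2)) auto
      also have "\<dots> \<le> 2 * real n * (phi t / t)" using Q_upper[OF t0] by (intro mult_left_mono) auto
      also have "\<dots> \<le> (2 * real n / b^2) * (t * phi t)"
      proof -
        have "phi t / t \<le> t * phi t / b^2"
        proof -
          have "b^2 \<le> t^2" using t b0 by (intro power_mono) auto
          then have "b^2 * phi t \<le> t^2 * phi t" using phi_pos[of t] by (intro mult_right_mono) auto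
          then show ?thesis using t0 b0 by (simp add: field_simps power2_eq_square)
        qed
        then have "2 * real n * (phi t / t) \<le> 2 * real n * (t * phi t / b^2)" by (intro mult_left_mono) auto
        moreover have "(2 * real n / b^2) * (t * phi t) = 2 * real n * (t * phi t / b^2)" by simp
        ultimately show ?thesis by linarith
      qed
      finally show "fJ n t \<le> (2 * real n / b^2) * (t * phi t)" .
    qed
    also have "\<dots> = 2 * real n * phi b / b^2"
      using int_tphi(2)[of b] b0 by (simp only: set_integral_mult_right) simp
    finally show ?thesis .
  qed
  have "(LINT t:{}|lborel. fJ n t) = 0" by (simp add: set_lebesgue_integral_def)
  then show ?thesis using S(1) P1 P3 by simp
qed

lemma J_lower:
  fixes n :: nat and a :: real
  assumes a: "1 \<le> a" and gint: "set_integrable lborel {0<..} (fJ n)"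
  shows "a * (1 - exp (- (2 * real n * qlo a))) \<le> (LINT t:{0<..}|lborel. fJ n t)"
proof -
  have a0: "0 < a" using a by simp
  note S = split3[OF a0 order_refl gint]
  have fJ0: "0 \<le> fJ n t" if "t > 0" for t
    unfolding fJ_def using that Q_half[of t] Q_nonneg[of t] by (intro pw5(1)) auto
  have P3: "0 \<le> (LINT t:{a<..}|lborel. fJ n t)" by (rule set_int_nonneg[OF S(4)]) (use a0 in \<open>auto intro: fJ0\<close>)
  have "(LINT t:{0<..a}|lborel. 1 - exp (- (2 * real n * qlo a))) \<le> (LINT t:{0<..a}|lborel. fJ n t)"
  proof (rule set_integral_mono[OF _ S(2)])
    show "set_integrable lborel {0<..a} (\<lambda>t. 1 - exp (- (2 * real n * qlo a)))"
      by (rule set_integrable_subset[OF borel_integrable_atLeastAtMost'[of 0 a]]) auto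
    fix t assume t: "t \<in> {0<..a}"
    have "qlo a \<le> Q a" using Q_lower[OF a0] by (simp add: qlo_def)
    also have "Q a \<le> Q t" using t by (intro Q_mono) auto
    finally have "exp (- (2 * real n * Q t)) \<le> exp (- (2 * real n * qlo a))" by (simp add: mult_left_mono)
    moreover have "1 - exp (- (2 * real n * Q t)) \<le> fJ n t"
      unfolding fJ_def using t Q_half[of t] Q_nonneg[of t] by (intro pw6) auto
    ultimately show "1 - exp (- (2 * real n * qlo a)) \<le> fJ n t" by linarith
  qed
  moreover have "(LINT t:{}|lborel. fJ n t) = 0" by (simp add: set_lebesgue_integral_def)
  ultimately show ?thesis using S(1) P3 a0 by (simp add: const_int)
qed

definition "Aa x = sqrt (2 * ln x - 8 * ln (ln x))"
definition "Bb x = sqrt (2 * ln x + 2 * ln (ln x))"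
definition "TT x = sqrt (2 * ln x)"

definition "LU x = 4 * x * TT x * (Aa x * exp (- (2 * x * qlo (Aa x)))
     + (x / Aa x) * (qhi (Bb x) / (2 * x - 2) + 1/(2 * x - 2)^2) + (x / Bb x) * (qhi (Bb x) ^ 2 / 2))"
definition "LL x = 4 * x * TT x * (exp (- (8 * x * qhi (Aa x) ^ 2)) * (Bb x / (1 + Bb x ^ 2)) * x *
      (exp (- (2 * x * qhi (Bb x))) / (2 * x)^2 - (1 / (2 * (2 * x)) + 1 / (2 * x)^2) * exp (- (2 * x * qlo (Aa x)))))"
definition "JUf x = (Bb x + 2 * x * phi (Bb x) / Bb x ^ 2) / TT x"
definition "JLf x = Aa x * (1 - exp (- (2 * x * qlo (Aa x)))) / TT x"

lemma two_powr_half: "(2::real) powr (1/2) * 2 powr (1/2) = 2"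
  by (simp add: powr_add[symmetric])

lemma phi_sqrt: "0 \<le> y \<Longrightarrow> phi (sqrt y) = exp (- y / 2) / sqrt (2 * pi)"
  by (simp add: std_normal_density_def)

lemma evA: "eventually (\<lambda>x::real. 1 \<le> 2 * ln x - 8 * ln (ln x)) at_top" by real_asymp
lemma evB: "eventually (\<lambda>x::real. 2 * ln x - 8 * ln (ln x) \<le> 2 * ln x + 2 * ln (ln x)) at_top" by real_asymp
lemma evq: "eventually (\<lambda>x::real. exp (- (2 * ln x - 8 * ln (ln x)) / 2) / sqrt (2 * pi) / sqrt (2 * ln x - 8 * ln (ln x)) \<le> 1/4) at_top"
  by real_asymp

lemma LU_lim: "(LU \<longlongrightarrow> 1) at_top"
proof -
  have "((\<lambda>x::real. 4 * x * sqrt (2 * ln x) * (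
   sqrt (2 * ln x - 8 * ln (ln x)) * exp (- (2 * x * ((exp (- (2 * ln x - 8 * ln (ln x)) / 2) / sqrt (2 * pi)) * sqrt (2 * ln x - 8 * ln (ln x)) / (1 + (2 * ln x - 8 * ln (ln x))))))
   + (x / sqrt (2 * ln x - 8 * ln (ln x))) * ((exp (- (2 * ln x + 2 * ln (ln x)) / 2) / sqrt (2 * pi) / sqrt (2 * ln x + 2 * ln (ln x))) / (2 * x - 2) + 1 / (2 * x - 2)^2)
   + (x / sqrt (2 * ln x + 2 * ln (ln x))) * ((exp (- (2 * ln x + 2 * ln (ln x)) / 2) / sqrt (2 * pi) / sqrt (2 * ln x + 2 * ln (ln x))) ^ 2 / 2))) \<longlongrightarrow> 1) at_top"
    by real_asymp
  moreover have "eventually (\<lambda>x. 4 * x * sqrt (2 * ln x) * (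
   sqrt (2 * ln x - 8 * ln (ln x)) * exp (- (2 * x * ((exp (- (2 * ln x - 8 * ln (ln x)) / 2) / sqrt (2 * pi)) * sqrt (2 * ln x - 8 * ln (ln x)) / (1 + (2 * ln x - 8 * ln (ln x))))))
   + (x / sqrt (2 * ln x - 8 * ln (ln x))) * ((exp (- (2 * ln x + 2 * ln (ln x)) / 2) / sqrt (2 * pi) / sqrt (2 * ln x + 2 * ln (ln x))) / (2 * x - 2) + 1 / (2 * x - 2)^2)
   + (x / sqrt (2 * ln x + 2 * ln (ln x))) * ((exp (- (2 * ln x + 2 * ln (ln x)) / 2) / sqrt (2 * pi) / sqrt (2 * ln x + 2 * ln (ln x))) ^ 2 / 2)) = LU x) at_top"
    using evA evB
  proof eventually_elim
    case (elim x)
    then have y1: "0 \<le> 2 * ln x - 8 * ln (ln x)" and y2: "0 \<le> 2 * ln x + 2 * ln (ln x)" by linarith+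
    show ?case unfolding LU_def Aa_def Bb_def TT_def qlo_def qhi_def phi_sqrt[OF y1] phi_sqrt[OF y2]
      using y1 y2 by simp
  qed
  ultimately show ?thesis by (rule Lim_transform_eventually)
qed

lemma LL_lim: "(LL \<longlongrightarrow> 1) at_top"
proof -
  have "((\<lambda>x::real. 4 * x * sqrt (2 * ln x) * (
   exp (- (8 * x * (exp (- (2 * ln x - 8 * ln (ln x)) / 2) / sqrt (2 * pi) / sqrt (2 * ln x - 8 * ln (ln x))) ^ 2))
   * (sqrt (2 * ln x + 2 * ln (ln x)) / (1 + (2 * ln x + 2 * ln (ln x)))) * x *
   (exp (- (2 * x * (exp (- (2 * ln x + 2 * ln (ln x)) / 2) / sqrt (2 * pi) / sqrt (2 * ln x + 2 * ln (ln x))))) / (2 * x)^2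
    - (1 / (2 * (2 * x)) + 1 / (2 * x)^2) * exp (- (2 * x * ((exp (- (2 * ln x - 8 * ln (ln x)) / 2) / sqrt (2 * pi)) * sqrt (2 * ln x - 8 * ln (ln x)) / (1 + (2 * ln x - 8 * ln (ln x))))))))) \<longlongrightarrow> 1) at_top"
    by (real_asymp simp add: two_powr_half)
  moreover have "eventually (\<lambda>x. 4 * x * sqrt (2 * ln x) * (
   exp (- (8 * x * (exp (- (2 * ln x - 8 * ln (ln x)) / 2) / sqrt (2 * pi) / sqrt (2 * ln x - 8 * ln (ln x))) ^ 2))
   * (sqrt (2 * ln x + 2 * ln (ln x)) / (1 + (2 * ln x + 2 * ln (ln x)))) * x *
   (exp (- (2 * x * (exp (- (2 * ln x + 2 * ln (ln x)) / 2) / sqrt (2 * pi) / sqrt (2 * ln x + 2 * ln (ln x))))) / (2 * x)^2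
    - (1 / (2 * (2 * x)) + 1 / (2 * x)^2) * exp (- (2 * x * ((exp (- (2 * ln x - 8 * ln (ln x)) / 2) / sqrt (2 * pi)) * sqrt (2 * ln x - 8 * ln (ln x)) / (1 + (2 * ln x - 8 * ln (ln x)))))))) = LL x) at_top"
    using evA evB
  proof eventually_elim
    case (elim x)
    then have y1: "0 \<le> 2 * ln x - 8 * ln (ln x)" and y2: "0 \<le> 2 * ln x + 2 * ln (ln x)" by linarith+
    show ?case unfolding LL_def Aa_def Bb_def TT_def qlo_def qhi_def phi_sqrt[OF y1] phi_sqrt[OF y2]
      using y1 y2 by simp
  qed
  ultimately show ?thesis by (rule Lim_transform_eventually)
qed

lemma JU_lim: "(JUf \<longlongrightarrow> 1) at_top"
proof -
  have "((\<lambda>x::real. (sqrt (2 * ln x + 2 * ln (ln x)) + 2 * x * (exp (- (2 * ln x + 2 * ln (ln x)) / 2) / sqrt (2 * pi)) / (2 * ln x + 2 * ln (ln x))) / sqrt (2 * ln x)) \<longlongrightarrow> 1) at_top"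
    by real_asymp
  moreover have "eventually (\<lambda>x. (sqrt (2 * ln x + 2 * ln (ln x)) + 2 * x * (exp (- (2 * ln x + 2 * ln (ln x)) / 2) / sqrt (2 * pi)) / (2 * ln x + 2 * ln (ln x))) / sqrt (2 * ln x) = JUf x) at_top"
    using evA evB
  proof eventually_elim
    case (elim x)
    then have y2: "0 \<le> 2 * ln x + 2 * ln (ln x)" by linarith
    show ?case unfolding JUf_def Bb_def TT_def phi_sqrt[OF y2]
      using y2 by simp
  qed
  ultimately show ?thesis by (rule Lim_transform_eventually)
qed

lemma JL_lim: "(JLf \<longlongrightarrow> 1) at_top"
proof -
  have "((\<lambda>x::real. sqrt (2 * ln x - 8 * ln (ln x)) * (1 - exp (- (2 * x * ((exp (- (2 * ln x - 8 * ln (ln x)) / 2) / sqrt (2 * pi)) * sqrt (2 * ln x - 8 * ln (ln x)) / (1 + (2 * ln x - 8 * ln (ln x))))))) / sqrt (2 * ln x)) \<longlongrightarrow> 1) at_top"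
    by real_asymp
  moreover have "eventually (\<lambda>x. sqrt (2 * ln x - 8 * ln (ln x)) * (1 - exp (- (2 * x * ((exp (- (2 * ln x - 8 * ln (ln x)) / 2) / sqrt (2 * pi)) * sqrt (2 * ln x - 8 * ln (ln x)) / (1 + (2 * ln x - 8 * ln (ln x))))))) / sqrt (2 * ln x) = JLf x) at_top"
    using evA
  proof eventually_elim
    case (elim x)
    then have y1: "0 \<le> 2 * ln x - 8 * ln (ln x)" by linarith
    show ?case unfolding JLf_def Aa_def TT_def qlo_def phi_sqrt[OF y1]
      using y1 by simp
  qed
  ultimately show ?thesis by (rule Lim_transform_eventually)
qed

lemma ev_cond: "eventually (\<lambda>x. 2 \<le> x \<and> 1 \<le> Aa x \<and> Aa x \<le> Bb x \<and> qhi (Aa x) \<le> 1/4) at_top"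
  using evA evB evq eventually_ge_at_top[of 2]
proof eventually_elim
  case (elim x)
  then have y1: "1 \<le> 2 * ln x - 8 * ln (ln x)" by linarith
  then have y1': "0 \<le> 2 * ln x - 8 * ln (ln x)" by linarith
  have "1 \<le> Aa x" unfolding Aa_def using y1 by simp
  moreover have "Aa x \<le> Bb x" unfolding Aa_def Bb_def using elim by simp
  moreover have "qhi (Aa x) \<le> 1/4" unfolding qhi_def Aa_def phi_sqrt[OF y1'] using elim by simp
  ultimately show ?case using elim by simp
qed

lemma ev_nat: "eventually (\<lambda>n::nat. 2 \<le> n \<and> 1 \<le> Aa (real n) \<and> Aa (real n) \<le> Bb (real n) \<and> qhi (Aa (real n)) \<le> 1/4) sequentially"
proof -
  have "eventually (\<lambda>n::nat. 2 \<le> real n \<and> 1 \<le> Aa (real n) \<and> Aa (real n) \<le> Bb (real n) \<and> qhi (Aa (real n)) \<le> 1/4) sequentially"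
    by (rule eventually_compose_filterlim[OF ev_cond filterlim_real_sequentially])
  then show ?thesis by eventually_elim simp
qed

lemma seq_lim: "(f \<longlongrightarrow> l) at_top \<Longrightarrow> ((\<lambda>n::nat. f (real n)) \<longlongrightarrow> l) sequentially"
  by (rule filterlim_compose[OF _ filterlim_real_sequentially])

lemma TT_pos: "2 \<le> x \<Longrightarrow> 0 < TT x"
  unfolding TT_def by simp

lemma I_asymp:
  assumes fint: "\<And>n. n \<ge> 1 \<Longrightarrow> set_integrable lborel {0<..} (fI n)"
  shows "((\<lambda>n. 4 * real n * TT (real n) * (LINT t:{0<..}|lborel. fI n t)) \<longlongrightarrow> 1) sequentially"
proof (rule tendsto_sandwich[of "\<lambda>n. LL (real n)" _ _ "\<lambda>n. LU (real n)"])
  show "((\<lambda>n. LL (real n)) \<longlongrightarrow> 1) sequentially" by (rule seq_lim[OF LL_lim])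
  show "((\<lambda>n. LU (real n)) \<longlongrightarrow> 1) sequentially" by (rule seq_lim[OF LU_lim])
  show "eventually (\<lambda>n. LL (real n) \<le> 4 * real n * TT (real n) * (LINT t:{0<..}|lborel. fI n t)) sequentially"
    using ev_nat
  proof eventually_elim
    case (elim n)
    have c: "0 \<le> 4 * real n * TT (real n)" using TT_pos[of "real n"] elim by simp
    show ?case unfolding LL_def
      by (rule mult_left_mono[OF I_lower c]) (use elim fint in auto)
  qed
  show "eventually (\<lambda>n. 4 * real n * TT (real n) * (LINT t:{0<..}|lborel. fI n t) \<le> LU (real n)) sequentially"
    using ev_nat
  proof eventually_elim
    case (elim n)
    have c: "0 \<le> 4 * real n * TT (real n)" using TT_pos[of "real n"] elim by simp
    show ?case unfolding LU_def
      by (rule mult_left_mono[OF I_upper c]) (use elim fint in auto)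
  qed
qed

lemma J_asymp:
  assumes gint: "\<And>n. n \<ge> 1 \<Longrightarrow> set_integrable lborel {0<..} (fJ n)"
  shows "((\<lambda>n. (LINT t:{0<..}|lborel. fJ n t) / TT (real n)) \<longlongrightarrow> 1) sequentially"
proof (rule tendsto_sandwich[of "\<lambda>n. JLf (real n)" _ _ "\<lambda>n. JUf (real n)"])
  show "((\<lambda>n. JLf (real n)) \<longlongrightarrow> 1) sequentially" by (rule seq_lim[OF JL_lim])
  show "((\<lambda>n. JUf (real n)) \<longlongrightarrow> 1) sequentially" by (rule seq_lim[OF JU_lim])
  show "eventually (\<lambda>n. JLf (real n) \<le> (LINT t:{0<..}|lborel. fJ n t) / TT (real n)) sequentially"
    using ev_nat
  proof eventually_elim
    case (elim n)
    have c: "0 < TT (real n)" using TT_pos[of "real n"] elim by simp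
    show ?case unfolding JLf_def
      by (rule divide_right_mono[OF J_lower]) (use elim gint c in auto)
  qed
  show "eventually (\<lambda>n. (LINT t:{0<..}|lborel. fJ n t) / TT (real n) \<le> JUf (real n)) sequentially"
    using ev_nat
  proof eventually_elim
    case (elim n)
    have c: "0 < TT (real n)" using TT_pos[of "real n"] elim by simp
    have "1 \<le> Bb (real n)" using elim by linarith
    then show ?case unfolding JUf_def
      by (intro divide_right_mono J_upper) (use elim gint c in auto)
  qed
qed

lemma quarter_lim1: "((\<lambda>x::real. x * sqrt (2 * ln x) * (1/4) powr x) \<longlongrightarrow> 0) at_top"
  by real_asymp

lemma quarter_lim2: "((\<lambda>x::real. (1/4) powr x / sqrt (2 * ln x)) \<longlongrightarrow> 0) at_top"
  by real_asymp

lemma N_asymp: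
  fixes N :: "nat \<Rightarrow> real"
  assumes N: "\<And>n. n \<ge> 1 \<Longrightarrow> 0 \<le> N n \<and> N n \<le> C * (1/4)^n"
  shows "((\<lambda>n. 4 * real n * TT (real n) * N n) \<longlongrightarrow> 0) sequentially"
    "((\<lambda>n. N n / TT (real n)) \<longlongrightarrow> 0) sequentially"
proof -
  have pw: "(1/4::real) powr real n = (1/4)^n" for n by (simp add: powr_realpow)
  have l1: "((\<lambda>n. 4 * C * (real n * TT (real n) * (1/4)^n)) \<longlongrightarrow> 0) sequentially"
    using tendsto_mult_right_zero[OF seq_lim[OF quarter_lim1], of "4 * C"] by (simp add: pw TT_def)
  have l2: "((\<lambda>n. C * ((1/4)^n / TT (real n))) \<longlongrightarrow> 0) sequentially"
    using tendsto_mult_right_zero[OF seq_lim[OF quarter_lim2], of C] by (simp add: pw TT_def)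
  show "((\<lambda>n. 4 * real n * TT (real n) * N n) \<longlongrightarrow> 0) sequentially"
  proof (rule tendsto_sandwich[of "\<lambda>_. 0" _ _ "\<lambda>n. 4 * C * (real n * TT (real n) * (1/4)^n)"])
    show "eventually (\<lambda>n. 0 \<le> 4 * real n * TT (real n) * N n) sequentially"
      using ev_nat
    proof eventually_elim
      case (elim n) then show ?case using N[of n] TT_pos[of "real n"] by simp
    qed
    show "eventually (\<lambda>n. 4 * real n * TT (real n) * N n \<le> 4 * C * (real n * TT (real n) * (1/4)^n)) sequentially"
      using ev_nat
    proof eventually_elim
      case (elim n)
      have c: "0 \<le> 4 * real n * TT (real n)" using TT_pos[of "real n"] elim by simp
      have "4 * real n * TT (real n) * N n \<le> 4 * real n * TT (real n) * (C * (1/4)^n)"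
        using N[of n] elim by (intro mult_left_mono c) auto
      then show ?case by (simp add: algebra_simps)
    qed
  qed (use l1 in auto)
  show "((\<lambda>n. N n / TT (real n)) \<longlongrightarrow> 0) sequentially"
  proof (rule tendsto_sandwich[of "\<lambda>_. 0" _ _ "\<lambda>n. C * ((1/4)^n / TT (real n))"])
    show "eventually (\<lambda>n. 0 \<le> N n / TT (real n)) sequentially"
      using ev_nat
    proof eventually_elim
      case (elim n) then show ?case using N[of n] TT_pos[of "real n"] by simp
    qed
    show "eventually (\<lambda>n. N n / TT (real n) \<le> C * ((1/4)^n / TT (real n))) sequentially"
      using ev_nat
    proof eventually_elim
      case (elim n)
      have c: "0 < TT (real n)" using TT_pos[of "real n"] elim by simp
      have "N n / TT (real n) \<le> (C * (1/4)^n) / TT (real n)"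
        using N[of n] elim c by (intro divide_right_mono) auto
      then show ?case by simp
    qed
  qed (use l2 in auto)
qed

context gauss_setup
begin

lemma Phi_Q: "Phi t = 1 - Q t" by (simp add: Q_def)

lemma EB_repr:
  assumes n: "n \<ge> 1"
  shows "set_integrable lborel {0<..} (fJ n)"
    "set_integrable lborel {..<0} (\<lambda>t. Phi t ^ (2*n))"
    "expectation (Bmax n) = (LINT t:{0<..}|lborel. fJ n t) - (LINT t:{..<0}|lborel. Phi t ^ (2*n))"
proof -
  note LC = layer_cake[OF Bmax_int[OF n]]
  have e1: "\<And>t. t \<in> {0<..} \<Longrightarrow> prob {\<omega>\<in>space M. t \<le> Bmax n \<omega>} = fJ n t"
    using n by (simp add: Bmax_ge fJ_def Phi_Q)
  have e2: "\<And>t. t \<in> {..<0} \<Longrightarrow> prob {\<omega>\<in>space M. Bmax n \<omega> \<le> t} = Phi t ^ (2*n)"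
    using n by (simp add: Bmax_le)
  show "set_integrable lborel {0<..} (fJ n)"
    using LC(1) by (subst (asm) set_integrable_cong[OF refl refl e1]) auto
  show "set_integrable lborel {..<0} (\<lambda>t. Phi t ^ (2*n))"
    using LC(2) by (subst (asm) set_integrable_cong[OF refl refl e2]) auto
  show "expectation (Bmax n) = (LINT t:{0<..}|lborel. fJ n t) - (LINT t:{..<0}|lborel. Phi t ^ (2*n))"
  proof -
    have c1: "(LINT t:{0<..}|lborel. prob {\<omega>\<in>space M. t \<le> Bmax n \<omega>}) = (LINT t:{0<..}|lborel. fJ n t)"
      by (rule set_lebesgue_integral_cong) (use e1 in auto)
    have c2: "(LINT t:{..<0}|lborel. prob {\<omega>\<in>space M. Bmax n \<omega> \<le> t}) = (LINT t:{..<0}|lborel. Phi t ^ (2*n))"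
      by (rule set_lebesgue_integral_cong) (use e2 in auto)
    show ?thesis using LC(3) c1 c2 by simp
  qed
qed

lemma EA_repr:
  assumes n: "n \<ge> 1"
  shows "set_integrable lborel {0<..} (fI n)"
    "expectation (Amax n) = (LINT t:{0<..}|lborel. fJ n t) + (LINT t:{0<..}|lborel. fI n t)"
proof -
  note LC = layer_cake[OF Amax_int[OF n]]
  have e1: "\<And>t. t \<in> {0<..} \<Longrightarrow> prob {\<omega>\<in>space M. t \<le> Amax n \<omega>} = fJ n t + fI n t"
    using n by (simp add: Amax_ge fJ_def fI_def)
  have e2: "\<And>t. t \<in> {..<0} \<Longrightarrow> prob {\<omega>\<in>space M. Amax n \<omega> \<le> t} = 0"
    using n by (simp add: Amax_le)
  have i1: "set_integrable lborel {0<..} (\<lambda>t. fJ n t + fI n t)"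
    using LC(1) by (subst (asm) set_integrable_cong[OF refl refl e1]) auto
  have i2: "set_integrable lborel {0<..} (fJ n)" by (rule EB_repr(1)[OF n])
  have "set_integrable lborel {0<..} (\<lambda>t. (fJ n t + fI n t) - fJ n t)"
    by (rule set_integral_diff(1)[OF i1 i2])
  then show i3: "set_integrable lborel {0<..} (fI n)" by simp
  have "expectation (Amax n) = (LINT t:{0<..}|lborel. fJ n t + fI n t) - (LINT t:{..<0}|lborel. (0::real))"
  proof -
    have c1: "(LINT t:{0<..}|lborel. prob {\<omega>\<in>space M. t \<le> Amax n \<omega>}) = (LINT t:{0<..}|lborel. fJ n t + fI n t)"
      by (rule set_lebesgue_integral_cong) (use e1 in auto)
    have c2: "(LINT t:{..<0}|lborel. prob {\<omega>\<in>space M. Amax n \<omega> \<le> t}) = (LINT t:{..<0}|lborel. (0::real))"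
    proof -
      have "(\<lambda>t. indicator {..<0} t *\<^sub>R prob {\<omega>\<in>space M. Amax n \<omega> \<le> t}) = (\<lambda>t::real. indicator {..<0} t *\<^sub>R (0::real))"
        by (rule ext) (auto simp: e2 split: split_indicator)
      then show ?thesis by (simp add: set_lebesgue_integral_def)
    qed
    show ?thesis using LC(3) c1 c2 by simp
  qed
  also have "(LINT t:{0<..}|lborel. fJ n t + fI n t) - (LINT t:{..<0}|lborel. (0::real)) = (LINT t:{0<..}|lborel. fJ n t) + (LINT t:{0<..}|lborel. fI n t)"
    using set_integral_add(2)[OF i2 i3] by (simp add: set_lebesgue_integral_def)
  finally show "expectation (Amax n) = (LINT t:{0<..}|lborel. fJ n t) + (LINT t:{0<..}|lborel. fI n t)" .
qed

definition "CC = (LINT t:{..<0}|lborel. Phi t)"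

lemma Phi_int: "set_integrable lborel {..<0} Phi"
proof -
  note LC = layer_cake[OF eta_int[OF order_refl]]
  have e: "\<And>t. t \<in> {..<0} \<Longrightarrow> prob {\<omega>\<in>space M. \<eta> 1 \<omega> \<le> t} = Phi t"
  proof -
    fix t :: real
    have "{\<omega>\<in>space M. \<eta> 1 \<omega> \<le> t} = \<eta> 1 -` {..t} \<inter> space M" by auto
    then show "prob {\<omega>\<in>space M. \<eta> 1 \<omega> \<le> t} = Phi t" by (simp add: prob_le)
  qed
  show ?thesis using LC(2) by (subst (asm) set_integrable_cong[OF refl refl e]) auto
qed

lemma Phi_neg: "t < 0 \<Longrightarrow> 0 \<le> Phi t \<and> Phi t \<le> 1/2"
  using Phi_reflect[of "-t"] Q_half[of "-t"] Q_nonneg[of "-t"] by simp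

lemma NN_bounds:
  assumes n: "n \<ge> 1"
  shows "0 \<le> (LINT t:{..<0}|lborel. Phi t ^ (2*n)) \<and> (LINT t:{..<0}|lborel. Phi t ^ (2*n)) \<le> (2 * CC) * (1/4)^n"
proof
  note i = EB_repr(2)[OF n]
  show "0 \<le> (LINT t:{..<0}|lborel. Phi t ^ (2*n))"
    by (rule set_int_nonneg[OF i]) (use Phi_neg in auto)
  have "(LINT t:{..<0}|lborel. Phi t ^ (2*n)) \<le> (LINT t:{..<0}|lborel. (2 * (1/4)^n) * Phi t)"
  proof (rule set_integral_mono[OF i])
    show "set_integrable lborel {..<0} (\<lambda>t. (2 * (1/4)^n) * Phi t)"
      by (intro set_integrable_mult_right Phi_int)
    fix t :: real assume "t \<in> {..<0}"
    then have p: "0 \<le> Phi t" "Phi t \<le> 1/2" using Phi_neg by auto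
    obtain m where m: "2 * n = Suc m" using n by (cases n) auto
    have "Phi t ^ (2*n) = Phi t ^ m * Phi t" using m by simp
    also have "\<dots> \<le> (1/2) ^ m * Phi t" using p by (intro mult_right_mono power_mono) auto
    also have "(1/2::real) ^ m = 2 * (1/4)^n"
    proof -
      have "(1/2::real) ^ Suc m = (1/4)^n" unfolding m[symmetric] by (simp add: power_mult power2_eq_square)
      then show ?thesis by simp
    qed
    finally show "Phi t ^ (2*n) \<le> (2 * (1/4)^n) * Phi t" .
  qed
  also have "\<dots> = (2 * CC) * (1/4)^n" by (simp add: CC_def set_integral_mult_right)
  finally show "(LINT t:{..<0}|lborel. Phi t ^ (2*n)) \<le> (2 * CC) * (1/4)^n" .
qed

lemma main:
  "((\<lambda>n::nat. 8 * real n * ln (real n) * (expectation (Amax n) / expectation (Bmax n) - 1)) \<longlongrightarrow> 1) sequentially"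
proof -
  define Ia where "Ia n = (LINT t:{0<..}|lborel. fI n t)" for n
  define Ja where "Ja n = (LINT t:{0<..}|lborel. fJ n t)" for n
  define NN where "NN n = (LINT t:{..<0}|lborel. Phi t ^ (2*n))" for n
  have NB: "\<And>n. n \<ge> 1 \<Longrightarrow> 0 \<le> NN n \<and> NN n \<le> (2 * CC) * (1/4)^n"
    unfolding NN_def by (rule NN_bounds)
  have X: "((\<lambda>n. 4 * real n * TT (real n) * Ia n + 4 * real n * TT (real n) * NN n) \<longlongrightarrow> 1 + 0) sequentially"
    unfolding Ia_def by (intro tendsto_add I_asymp N_asymp(1)[OF NB] EA_repr(1)) auto
  have Y: "((\<lambda>n. Ja n / TT (real n) - NN n / TT (real n)) \<longlongrightarrow> 1 - 0) sequentially"
    unfolding Ja_def by (intro tendsto_diff J_asymp N_asymp(2)[OF NB] EB_repr(1)) auto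
  have Yinv: "((\<lambda>n. inverse (Ja n / TT (real n) - NN n / TT (real n))) \<longlongrightarrow> inverse 1) sequentially"
    using Y by (intro tendsto_inverse) auto
  have lim: "((\<lambda>n. (4 * real n * TT (real n) * Ia n + 4 * real n * TT (real n) * NN n) *
      inverse (Ja n / TT (real n) - NN n / TT (real n))) \<longlongrightarrow> 1 * inverse 1) sequentially"
    using tendsto_mult[OF X Yinv] by simp
  have evpos: "eventually (\<lambda>n. 1/2 < Ja n / TT (real n) - NN n / TT (real n)) sequentially"
    using Y by (intro order_tendstoD(1)) auto
  have "eventually (\<lambda>n. (4 * real n * TT (real n) * Ia n + 4 * real n * TT (real n) * NN n) *
      inverse (Ja n / TT (real n) - NN n / TT (real n))
      = 8 * real n * ln (real n) * (expectation (Amax n) / expectation (Bmax n) - 1)) sequentially"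
    using evpos ev_nat
  proof eventually_elim
    case (elim n)
    then have n1: "n \<ge> 1" by simp
    have T: "0 < TT (real n)" using TT_pos[of "real n"] elim by simp
    have T2: "TT (real n) * TT (real n) = 2 * ln (real n)"
      unfolding TT_def using elim by simp
    have EB: "expectation (Bmax n) = Ja n - NN n" unfolding Ja_def NN_def by (rule EB_repr(3)[OF n1])
    have EA: "expectation (Amax n) = Ja n + Ia n" unfolding Ja_def Ia_def by (rule EA_repr(2)[OF n1])
    have Y': "Ja n / TT (real n) - NN n / TT (real n) = (Ja n - NN n) / TT (real n)" by (simp add: diff_divide_distrib)
    have EB0: "Ja n - NN n \<noteq> 0" using elim(1) T unfolding Y' by auto
    have L8: "8 * real n * ln (real n) = 4 * real n * TT (real n) * TT (real n)" using T2 by simp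
    show ?case unfolding EA EB Y' L8 using EB0 T
      by (simp add: field_simps)
  qed
  from Lim_transform_eventually[OF lim this] show ?thesis by simp
qed

end

theorem theorem2p3:
  fixes M :: "'a measure" and \<eta> :: "nat \<Rightarrow> 'a \<Rightarrow> real"
  assumes "prob_space M"
    and "prob_space.indep_vars M (\<lambda>_. borel) \<eta> {1..}"
    and "\<And>i. i \<ge> 1 \<Longrightarrow> distributed M lborel (\<eta> i) std_normal_density"
  shows "((\<lambda>n::nat.
            8 * real n * ln (real n) *
            (prob_space.expectation M (\<lambda>\<omega>. Max ((\<lambda>i. \<bar>\<eta> i \<omega>\<bar>) ` {1..n}))
             / prob_space.expectation M (\<lambda>\<omega>. Max ((\<lambda>i. \<eta> i \<omega>) ` {1..2*n})) - 1))
         \<longlongrightarrow> 1) sequentially"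
proof -
  interpret gauss_setup M \<eta>
    by (intro gauss_setup.intro gauss_setup_axioms.intro assms)
  have "((\<lambda>n::nat. 8 * real n * ln (real n) * (expectation (Amax n) / expectation (Bmax n) - 1)) \<longlongrightarrow> 1) sequentially"
    by (rule main)
  moreover have "Amax = (\<lambda>n \<omega>. Max ((\<lambda>i. \<bar>\<eta> i \<omega>\<bar>) ` {1..n}))" by (simp add: Amax_def[abs_def])
  moreover have "Bmax = (\<lambda>n \<omega>. Max ((\<lambda>i. \<eta> i \<omega>) ` {1..2*n}))" by (simp add: Bmax_def[abs_def])
  ultimately show ?thesis by simp
qed

end
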